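(* Let $V$ be a finite-dimensional super vector space over $\mathbb{Q}$ and let $\xi,\eta\in\operatorname{Der}(T(V^* ))$ be vector fields. Then \[ \nabla([\xi,\eta]) = (L_{\xi}\otimes 1 + 1\otimes L_{\xi})[\nabla(\eta)] - (-1)^{|\xi||\eta|} (L_{\eta}\otimes 1 + 1\otimes L_{\eta})[\nabla(\xi)]. \]
   Context: All vector spaces are $\mathbb{Z}/2$-graded (super) vector spaces over $\mathbb{Q}$ and the Koszul sign rule is used throughout; $|a|$ denotes the parity of $a$. $T(V^* )=\bigoplus_{i\ge 0}(V^* )^{\otimes i}$ is the tensor algebra on the dual space; a vector field is a graded derivation of $T(V^* )$, and $\operatorname{Der}(T(V^* ))$ denotes the space of these, with graded commutator $[\xi,\eta]=\xi\eta-(-1)^{|\xi||\eta|}\eta\xi$. The space of noncommutative $0$-forms is $\mathrm{DR}^0(V):=T(V^* )/[T(V^* ),T(V^* )]$ (quotient by the subspace of graded commutators), which equals $\bigoplus_{i\ge0}((V^* )^{\otimes i})_{\mathbb{Z}/i\mathbb{Z}}$ (cyclic coinvariants). A vector field $\xi$ maps commutators to commutators and so induces the Lie derivative $L_\xi:\mathrm{DR}^0(V)\to\mathrm{DR}^0(V)$, $L_\xi(x)=\xi(x)$. On $\mathrm{DR}^0(V)\otimes\mathrm{DR}^0(V)$, $(L_\xi\otimes1+1\otimes L_\xi)(a\otimes b)=L_\xi(a)\otimes b+(-1)^{|\xi||a|}a\otimes L_\xi(b)$. Divergence: choose homogeneous coordinates $x_1,\dots,x_N$ on $V$ (a basis of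 $V^*$) and let $\partial_{x_i}$ be the derivation with $\partial_{x_i}(x_j)=\delta_{ij}$. For linear functions $f_1,\dots,f_k\in V^*$ and the vector field $\xi=(f_1\cdots f_k)\partial_{x_i}$, define \[ \nabla(\xi):=\sum_{j=1}^k (-1)^{|x_i|(|f_j|+\cdots+|f_k|)}\, \partial_{x_i}(f_j)\,[(f_1\cdots f_{j-1})\otimes (f_{j+1}\cdots f_k)] \in \mathrm{DR}^0(V)\otimes\mathrm{DR}^0(V), \] (here $\partial_{x_i}(f_j)\in\mathbb{Q}$) and extend linearly to $\nabla:\operatorname{Der}(T(V^* ))\to\mathrm{DR}^0(V)\otimes\mathrm{DR}^0(V)$; this is independent of the choice of coordinates. *)

theory Defs
  imports Complex_Main "HOL-Library.Poly_Mapping"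
begin

text \<open>Coordinates of V are indexed by a finite type 'a; the parity of the
  coordinate x_i is given by par i (True = odd).  T(V^*) is the free
  associative algebra on the x_i: finitely supported rational combinations of
  words.  T(V^*) tensor T(V^*) has basis the pairs of words.\<close>

type_synonym 'a tens = "'a list \<Rightarrow>\<^sub>0 rat"
type_synonym 'a tens2 = "('a list \<times> 'a list) \<Rightarrow>\<^sub>0 rat"

definition ksign :: "bool \<Rightarrow> rat" where
  "ksign b = (if b then -1 else 1)"

definition wpar :: "('a \<Rightarrow> bool) \<Rightarrow> 'a list \<Rightarrow> bool" where
  "wpar par w = odd (length (filter par w))"

definition scal :: "rat \<Rightarrow> ('b \<Rightarrow>\<^sub>0 rat) \<Rightarrow> ('b \<Rightarrow>\<^sub>0 rat)" where
  "scal c a = Poly_Mapping.map (\<lambda>x. c * x) a"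

definition lin_ext :: "('b \<Rightarrow> ('c \<Rightarrow>\<^sub>0 rat)) \<Rightarrow> ('b \<Rightarrow>\<^sub>0 rat) \<Rightarrow> ('c \<Rightarrow>\<^sub>0 rat)" where
  "lin_ext f a = (\<Sum>w\<in>Poly_Mapping.keys a. scal (Poly_Mapping.lookup a w) (f w))"

definition tmul :: "'a tens \<Rightarrow> 'a tens \<Rightarrow> 'a tens" where
  "tmul a b = lin_ext (\<lambda>u. lin_ext (\<lambda>v. Poly_Mapping.single (u @ v) 1) b) a"

definition tensor :: "'a tens \<Rightarrow> 'a tens \<Rightarrow> 'a tens2" where
  "tensor a b = lin_ext (\<lambda>u. lin_ext (\<lambda>v. Poly_Mapping.single (u, v) 1) b) a"

definition homog :: "('a \<Rightarrow> bool) \<Rightarrow> bool \<Rightarrow> 'a tens \<Rightarrow> bool" where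
  "homog par q a \<longleftrightarrow> (\<forall>w\<in>Poly_Mapping.keys a. wpar par w = q)"

definition rspan :: "('b \<Rightarrow>\<^sub>0 rat) set \<Rightarrow> ('b \<Rightarrow>\<^sub>0 rat) set" where
  "rspan S = {x. \<exists>F c. finite F \<and> F \<subseteq> S \<and> x = (\<Sum>s\<in>F. scal (c s) s)}"

definition is_vector_field :: "('a \<Rightarrow> bool) \<Rightarrow> bool \<Rightarrow> ('a tens \<Rightarrow> 'a tens) \<Rightarrow> bool" where
  "is_vector_field par p D \<longleftrightarrow>
     (\<forall>a b. D (a + b) = D a + D b) \<and>
     (\<forall>c a. D (scal c a) = scal c (D a)) \<and>
     (\<forall>q a. homog par q a \<longrightarrow> homog par (q \<noteq> p) (D a)) \<and>
     (\<forall>q a b. homog par q a \<longrightarrow>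
        D (tmul a b) = tmul (D a) b + scal (ksign (p \<and> q)) (tmul a (D b)))"

definition vf_bracket :: "bool \<Rightarrow> ('a tens \<Rightarrow> 'a tens) \<Rightarrow> bool \<Rightarrow> ('a tens \<Rightarrow> 'a tens) \<Rightarrow> 'a tens \<Rightarrow> 'a tens" where
  "vf_bracket p D q E = (\<lambda>a. D (E a) - scal (ksign (p \<and> q)) (E (D a)))"

definition gen :: "'a \<Rightarrow> 'a tens" where
  "gen i = Poly_Mapping.single [i] 1"

text \<open>Divergence, lifted to T tensor T (representatives of classes in
  DR^0 tensor DR^0):  D = sum_i D(x_i) d/dx_i, and for a word
  w = f_1...f_k, the summand at position j (0-based) with f_j = x_i has sign
  (-1)^(|x_i| (|f_j|+...+|f_k|)).\<close>
definition nabla :: "('a::finite \<Rightarrow> bool) \<Rightarrow> ('a tens \<Rightarrow> 'a tens) \<Rightarrow> 'a tens2" where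
  "nabla par D = (\<Sum>i\<in>UNIV. lin_ext (\<lambda>w. \<Sum>j<length w.
       if w ! j = i then Poly_Mapping.single (take j w, drop (Suc j) w)
                           (ksign (par i \<and> wpar par (drop j w)))
       else 0) (D (gen i)))"

text \<open>L_xi tensor 1 + 1 tensor L_xi, on representatives.\<close>
definition L2 :: "('a \<Rightarrow> bool) \<Rightarrow> bool \<Rightarrow> ('a tens \<Rightarrow> 'a tens) \<Rightarrow> 'a tens2 \<Rightarrow> 'a tens2" where
  "L2 par p D = lin_ext (\<lambda>(u, v).
      tensor (D (Poly_Mapping.single u 1)) (Poly_Mapping.single v 1)
    + scal (ksign (p \<and> wpar par u)) (tensor (Poly_Mapping.single u 1) (D (Poly_Mapping.single v 1))))"

definition comm_sub :: "('a \<Rightarrow> bool) \<Rightarrow> 'a tens set" where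
  "comm_sub par = rspan {tmul a b - scal (ksign (p \<and> q)) (tmul b a) | a b p q.
                          homog par p a \<and> homog par q b}"

text \<open>Kernel of T tensor T \<rightarrow> DR^0 tensor DR^0, i.e. [T,T] tensor T + T tensor [T,T].\<close>
definition dr2_kernel :: "('a \<Rightarrow> bool) \<Rightarrow> 'a tens2 set" where
  "dr2_kernel par = rspan ({tensor a b | a b. a \<in> comm_sub par} \<union>
                           {tensor a b | a b. b \<in> comm_sub par})"

text \<open>Equality in DR^0(V) tensor DR^0(V) of the classes of two representatives.\<close>
definition dr2_eq :: "('a \<Rightarrow> bool) \<Rightarrow> 'a tens2 \<Rightarrow> 'a tens2 \<Rightarrow> bool" where
  "dr2_eq par x y \<longleftrightarrow> x - y \<in> dr2_kernel par"

end

theory Submission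
  imports Defs
begin


lemma lookup_scal[simp]: "Poly_Mapping.lookup (scal c a) x = c * Poly_Mapping.lookup a x"
  by (simp add: scal_def map.rep_eq when_def)

lemma scal_add[simp]: "scal c (a + b) = scal c a + scal c b"
  by (rule poly_mapping_eqI) (simp add: lookup_add algebra_simps)
lemma scal_diff[simp]: "scal c (a - b) = scal c a - scal c b"
  by (rule poly_mapping_eqI) (simp add: lookup_minus algebra_simps)
lemma scal_zero[simp]: "scal c 0 = 0" "scal 0 a = 0"
  by (rule poly_mapping_eqI, simp)+
lemma scal_one[simp]: "scal 1 a = a"
  by (rule poly_mapping_eqI) simp
lemma scal_scal[simp]: "scal c (scal d a) = scal (c*d) a"
  by (rule poly_mapping_eqI) simp
lemma scal_addl: "scal (c+d) a = scal c a + scal d a"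
  by (rule poly_mapping_eqI) (simp add: lookup_add algebra_simps)
lemma scal_diffl: "scal (c-d) a = scal c a - scal d a"
  by (rule poly_mapping_eqI) (simp add: lookup_minus algebra_simps)
lemma scal_sum: "scal c (sum f A) = (\<Sum>x\<in>A. scal c (f x))"
  by (induction A rule: infinite_finite_induct) auto
lemma scal_single[simp]: "scal c (Poly_Mapping.single w d) = Poly_Mapping.single w (c*d)"
  by (rule poly_mapping_eqI) (simp add: lookup_single when_def)
lemma scal_if: "scal c (if P then a else b) = (if P then scal c a else scal c b)" by simp

lemma pm_expand: "a = (\<Sum>w\<in>Poly_Mapping.keys a. Poly_Mapping.single w (Poly_Mapping.lookup a w))"
proof (rule poly_mapping_eqI)
  fix k
  have "(\<Sum>w\<in>Poly_Mapping.keys a. Poly_Mapping.lookup (Poly_Mapping.single w (Poly_Mapping.lookup a w)) k)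
      = (\<Sum>w\<in>Poly_Mapping.keys a. if w = k then Poly_Mapping.lookup a k else 0)"
    by (rule sum.cong) (auto simp: lookup_single when_def)
  also have "\<dots> = Poly_Mapping.lookup a k"
    by (simp add: in_keys_iff)
  finally show "Poly_Mapping.lookup a k = Poly_Mapping.lookup (\<Sum>w\<in>Poly_Mapping.keys a. Poly_Mapping.single w (Poly_Mapping.lookup a w)) k"
    by (simp add: lookup_sum)
qed

lemma lin_ext_superset:
  assumes "finite S" "Poly_Mapping.keys a \<subseteq> S"
  shows "lin_ext f a = (\<Sum>w\<in>S. scal (Poly_Mapping.lookup a w) (f w))"
  unfolding lin_ext_def
  by (rule sum.mono_neutral_left) (use assms in \<open>auto simp: in_keys_iff\<close>)

lemma lin_ext_add[simp]: "lin_ext f (a + b) = lin_ext f a + lin_ext f b"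
proof -
  let ?S = "Poly_Mapping.keys a \<union> Poly_Mapping.keys b"
  have "Poly_Mapping.keys (a+b) \<subseteq> ?S" by (rule keys_add)
  then show ?thesis
    by (simp add: lin_ext_superset[of ?S] lookup_add scal_addl sum.distrib)
qed
lemma lin_ext_zero[simp]: "lin_ext f 0 = 0"
  by (simp add: lin_ext_def)
lemma lin_ext_scal[simp]: "lin_ext f (scal c a) = scal c (lin_ext f a)"
proof -
  have "Poly_Mapping.keys (scal c a) \<subseteq> Poly_Mapping.keys a" by (auto simp: in_keys_iff)
  then show ?thesis
    by (simp add: lin_ext_superset[of "Poly_Mapping.keys a"] scal_sum)
qed
lemma lin_ext_minus[simp]: "lin_ext f (a - b) = lin_ext f a - lin_ext f b"
proof -
  have "lin_ext f (a - b) + lin_ext f b = lin_ext f a" by (metis lin_ext_add diff_add_cancel)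
  then show ?thesis by (simp add: eq_diff_eq)
qed
lemma lin_ext_sum: "lin_ext f (sum g A) = (\<Sum>x\<in>A. lin_ext f (g x))"
  by (induction A rule: infinite_finite_induct) auto
lemma lin_ext_single[simp]: "lin_ext f (Poly_Mapping.single w c) = scal c (f w)"
  by (cases "c = 0") (simp_all add: lin_ext_def)
lemma lin_ext_fadd: "lin_ext (\<lambda>w. f w + g w) a = lin_ext f a + lin_ext g a"
  by (simp add: lin_ext_def sum.distrib)
lemma lin_ext_fsum: "lin_ext (\<lambda>w. \<Sum>x\<in>X. f x w) a = (\<Sum>x\<in>X. lin_ext (f x) a)"
  by (simp add: lin_ext_def scal_sum sum.swap[of _ X])
lemma lin_ext_fscal: "lin_ext (\<lambda>w. scal c (f w)) a = scal c (lin_ext f a)"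
  by (simp add: lin_ext_def scal_sum mult.commute)
lemma lin_ext_cong: "(\<And>w. w \<in> Poly_Mapping.keys a \<Longrightarrow> f w = g w) \<Longrightarrow> lin_ext f a = lin_ext g a"
  by (simp add: lin_ext_def)

definition linmap :: "(('b \<Rightarrow>\<^sub>0 rat) \<Rightarrow> ('c \<Rightarrow>\<^sub>0 rat)) \<Rightarrow> bool" where
  "linmap F \<longleftrightarrow> (\<forall>a b. F (a + b) = F a + F b) \<and> (\<forall>c a. F (scal c a) = scal c (F a))"

lemma linmap_zero: "linmap F \<Longrightarrow> F 0 = 0"
  unfolding linmap_def by (metis add_cancel_right_right add_0)
lemma linmap_sum: "linmap F \<Longrightarrow> F (sum g A) = (\<Sum>x\<in>A. F (g x))"
  by (induction A rule: infinite_finite_induct) (auto simp: linmap_zero linmap_def)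
lemma linmap_expand: "linmap F \<Longrightarrow> F a = lin_ext (\<lambda>w. F (Poly_Mapping.single w 1)) a"
proof -
  assume F: "linmap F"
  have "F a = F (\<Sum>w\<in>Poly_Mapping.keys a. scal (Poly_Mapping.lookup a w) (Poly_Mapping.single w 1))"
    by (subst pm_expand) simp
  also have "\<dots> = lin_ext (\<lambda>w. F (Poly_Mapping.single w 1)) a"
    using F unfolding lin_ext_def by (subst linmap_sum) (auto simp: linmap_def simp del: scal_single)
  finally show ?thesis .
qed
lemma linmap_lin_ext: "linmap (lin_ext f)"
  by (simp add: linmap_def)
lemma lin_ext_comp: "lin_ext g (lin_ext f a) = lin_ext (\<lambda>w. lin_ext g (f w)) a"
  unfolding lin_ext_def[of f] by (simp add: lin_ext_sum lin_ext_def[of "\<lambda>w. lin_ext g (f w)"])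
lemma linmap_minus: "linmap F \<Longrightarrow> F (a - b) = F a - F b"
  unfolding linmap_def by (metis add_diff_cancel eq_diff_eq)




lemma ksign_simps[simp]: "ksign False = 1" "ksign True = -1" by (simp_all add: ksign_def)
lemma ksign_mult: "ksign a * ksign b = ksign (a \<noteq> b)" by (simp add: ksign_def)
lemma ksign_sq[simp]: "ksign a * ksign a = 1" by (simp add: ksign_def)
lemma ksign_conj_xor: "ksign (p \<and> (a \<noteq> b)) = ksign (p \<and> a) * ksign (p \<and> b)"
  by (cases p; cases a; cases b) (simp_all add: ksign_def)

lemma ksign_conj_xor'[simp]: "ksign (p \<and> (a = (\<not> b))) = ksign (p \<and> a) * ksign (p \<and> b)"
  by (cases p; cases a; cases b) (simp_all add: ksign_def)
lemma wpar_Nil[simp]: "wpar par [] = False" by (simp add: wpar_def)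
lemma wpar_Cons[simp]: "wpar par (x # w) = (par x \<noteq> wpar par w)" by (simp add: wpar_def)
lemma wpar_append[simp]: "wpar par (u @ v) = (wpar par u \<noteq> wpar par v)" by (simp add: wpar_def)

abbreviation sng :: "'b \<Rightarrow> rat \<Rightarrow> ('b \<Rightarrow>\<^sub>0 rat)" where "sng \<equiv> Poly_Mapping.single"
abbreviation lkp :: "('b \<Rightarrow>\<^sub>0 rat) \<Rightarrow> 'b \<Rightarrow> rat" where "lkp \<equiv> Poly_Mapping.lookup"
abbreviation kys :: "('b \<Rightarrow>\<^sub>0 rat) \<Rightarrow> 'b set" where "kys \<equiv> Poly_Mapping.keys"

lemma lin_ext_id: "lin_ext (\<lambda>v. sng v 1) x = x"
  using linmap_expand[of "\<lambda>x. x" x] by (simp add: linmap_def)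

lemma tmul_single_right: "tmul a (sng w 1) = (\<Sum>u\<in>kys a. sng (u @ w) (lkp a u))"
  by (simp add: tmul_def lin_ext_def)
lemma tmul_single_left: "tmul (sng u 1) b = lin_ext (\<lambda>v. sng (u @ v) 1) b"
  by (simp add: tmul_def)
lemma tmul_unit_left: "tmul (sng [] 1) b = b"
  by (simp add: tmul_single_left lin_ext_id)
lemma tmul_unit_right: "tmul a (sng [] 1) = a"
  by (simp add: tmul_def lin_ext_id)
lemma tmul_singles: "tmul (sng u c) (sng v d) = sng (u @ v) (c * d)"
  by (simp add: tmul_def)
lemma tensor_singles: "tensor (sng u c) (sng v d) = sng (u, v) (c * d)"
  by (simp add: tensor_def)
lemma tensor_diff_left: "tensor (a - b) c = tensor a c - tensor b c"
  by (simp add: tensor_def)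
lemma tensor_scal_left: "tensor (scal k a) c = scal k (tensor a c)"
  by (simp add: tensor_def)
lemma tensor_right_lin: "tensor a b = lin_ext (\<lambda>u. lin_ext (\<lambda>v. sng (u, v) 1) b) a" by (simp add: tensor_def)
lemma lin_ext_fdiff: "lin_ext (\<lambda>w. f w - g w) a = lin_ext f a - lin_ext g a"
  by (simp add: lin_ext_def sum_subtractf)
lemma tensor_diff_right: "tensor c (a - b) = tensor c a - tensor c b"
  unfolding tensor_def lin_ext_minus by (rule lin_ext_fdiff)
lemma tensor_scal_right: "tensor c (scal k a) = scal k (tensor c a)"
  unfolding tensor_def lin_ext_scal by (rule lin_ext_fscal)

lemma homog_single: "homog par (wpar par w) (sng w c)"
  by (simp add: homog_def)

lemma gen_homog: "homog par (par i) (gen i)"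
  unfolding gen_def using homog_single[of par "[i]" 1] by simp

lemma vf_linmap: "is_vector_field par p D \<Longrightarrow> linmap D"
  by (simp add: is_vector_field_def linmap_def)

lemma vf_unit: assumes "is_vector_field par p D" shows "D (sng [] 1) = 0"
proof -
  have h: "homog par False (sng [] 1)" using homog_single[of par "[]" 1] by simp
  have "D (tmul (sng [] 1) (sng [] 1)) = tmul (D (sng [] 1)) (sng [] 1) + scal (ksign (p \<and> False)) (tmul (sng [] 1) (D (sng [] 1)))"
    using assms h unfolding is_vector_field_def by blast
  then have "D (sng [] 1) = D (sng [] 1) + D (sng [] 1)"
    by (simp add: tmul_unit_left tmul_unit_right tmul_singles)
  then show ?thesis by simp
qed

definition Dw :: "('a \<Rightarrow> bool) \<Rightarrow> bool \<Rightarrow> ('a \<Rightarrow> 'a tens) \<Rightarrow> 'a list \<Rightarrow> 'a tens" where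
  "Dw par p d w = (\<Sum>k<length w. \<Sum>v\<in>kys (d (w ! k)).
      sng (take k w @ v @ drop (Suc k) w) (ksign (p \<and> wpar par (take k w)) * lkp (d (w ! k)) v))"

lemma vf_word:
  assumes VF: "is_vector_field par p D"
  shows "D (sng w 1) = Dw par p (\<lambda>i. D (gen i)) w"
proof (induction w)
  case Nil
  then show ?case using vf_unit[OF VF] by (simp add: Dw_def)
next
  case (Cons i w)
  let ?d = "\<lambda>i. D (gen i)"
  have e: "sng (i # w) 1 = tmul (gen i) (sng w 1)" by (simp add: gen_def tmul_singles)
  have "D (sng (i # w) 1) = tmul (?d i) (sng w 1) + scal (ksign (p \<and> par i)) (tmul (gen i) (D (sng w 1)))"
    using VF gen_homog[of par i] unfolding e is_vector_field_def by blast
  also have "tmul (gen i) (D (sng w 1)) = lin_ext (\<lambda>v. sng (i # v) 1) (D (sng w 1))"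
    by (simp add: gen_def tmul_single_left)
  also have "\<dots> = (\<Sum>k<length w. \<Sum>v\<in>kys (?d (w ! k)).
      sng (i # (take k w @ v @ drop (Suc k) w)) (ksign (p \<and> wpar par (take k w)) * lkp (?d (w ! k)) v))"
    unfolding Cons Dw_def by (simp add: lin_ext_sum)
  finally have 1: "D (sng (i # w) 1) = tmul (?d i) (sng w 1) + scal (ksign (p \<and> par i)) (\<Sum>k<length w. \<Sum>v\<in>kys (?d (w ! k)).
      sng (i # (take k w @ v @ drop (Suc k) w)) (ksign (p \<and> wpar par (take k w)) * lkp (?d (w ! k)) v))" .
  have 2: "Dw par p ?d (i # w) = (\<Sum>v\<in>kys (?d i). sng (v @ w) (lkp (?d i) v)) + scal (ksign (p \<and> par i)) (\<Sum>k<length w. \<Sum>v\<in>kys (?d (w ! k)).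
      sng (i # (take k w @ v @ drop (Suc k) w)) (ksign (p \<and> wpar par (take k w)) * lkp (?d (w ! k)) v))"
    unfolding Dw_def length_Cons sum.lessThan_Suc_shift by (simp add: scal_sum ksign_conj_xor mult.assoc)
  show ?case unfolding 1 2 by (simp add: tmul_single_right)
qed

lemma vf_rep:
  assumes VF: "is_vector_field par p D"
  shows "D a = lin_ext (Dw par p (\<lambda>i. D (gen i))) a"
  using linmap_expand[OF vf_linmap[OF VF], of a] vf_word[OF VF] by simp

lemma vf_gen_par:
  assumes VF: "is_vector_field par p D" and "v \<in> kys (D (gen i))"
  shows "wpar par v = (par i \<noteq> p)"
  using VF gen_homog[of par i] assms(2) unfolding is_vector_field_def homog_def by blast




lemma sum_lessThan_add: "(\<Sum>j<m+(n::nat). f j) = (\<Sum>j<m. f j) + (\<Sum>j<n. f (m + j))"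
  by (induction n) (simp_all add: add.assoc)

lemma sum_tri: "(\<Sum>k<n. \<Sum>j<n - Suc k. g k (Suc k + j)) = (\<Sum>j<n. \<Sum>k<j. g k j)"
proof (induction n)
  case 0 then show ?case by simp
next
  case (Suc n)
  have "(\<Sum>k<Suc n. \<Sum>j<Suc n - Suc k. g k (Suc k + j)) = (\<Sum>k<n. \<Sum>j<Suc n - Suc k. g k (Suc k + j))"
    by simp
  also have "\<dots> = (\<Sum>k<n. (\<Sum>j<n - Suc k. g k (Suc k + j)) + g k n)"
  proof (rule sum.cong)
    fix k assume "k \<in> {..<n}"
    then have "Suc n - Suc k = Suc (n - Suc k)" by auto
    moreover have "Suc k + (n - Suc k) = n" using \<open>k \<in> {..<n}\<close> by auto
    ultimately show "(\<Sum>j<Suc n - Suc k. g k (Suc k + j)) = (\<Sum>j<n - Suc k. g k (Suc k + j)) + g k n"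
      by simp
  qed simp
  also have "\<dots> = (\<Sum>k<n. \<Sum>j<n - Suc k. g k (Suc k + j)) + (\<Sum>k<n. g k n)" by (rule sum.distrib)
  also have "\<dots> = (\<Sum>j<n. \<Sum>k<j. g k j) + (\<Sum>k<n. g k n)" by (simp only: Suc.IH)
  also have "\<dots> = (\<Sum>j<Suc n. \<Sum>k<j. g k j)" by simp
  finally show ?case .
qed

definition Dl :: "('a \<Rightarrow> bool) \<Rightarrow> 'a \<Rightarrow> 'a list \<Rightarrow> 'a tens2" where
  "Dl par i w = (\<Sum>j<length w. if w ! j = i then sng (take j w, drop (Suc j) w)
                           (ksign (par i \<and> wpar par (drop j w))) else 0)"

lemma nabla_Dl: "nabla par D = (\<Sum>i\<in>UNIV. lin_ext (Dl par i) (D (gen i)))"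
  unfolding nabla_def Dl_def[abs_def] by simp

definition DlL where
  "DlL par i x y = (\<Sum>j<length x. if x ! j = i then sng (take j x, drop (Suc j) x @ y)
                           (ksign (par i \<and> wpar par (drop j x @ y))) else 0)"
definition DlR where
  "DlR par i x y = (\<Sum>j<length y. if y ! j = i then sng (x @ take j y, drop (Suc j) y)
                           (ksign (par i \<and> wpar par (drop j y))) else 0)"
definition DlM where
  "DlM par i x v y = (\<Sum>j<length v. if v ! j = i then sng (x @ take j v, drop (Suc j) v @ y)
                           (ksign (par i \<and> wpar par (drop j v @ y))) else 0)"

lemma Dl_append: "Dl par i (x @ y) = DlL par i x y + DlR par i x y"
  unfolding Dl_def DlL_def DlR_def length_append sum_lessThan_add
  by (intro arg_cong2[where f="(+)"] sum.cong) (auto simp: nth_append)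

lemma DlR_append: "DlR par i x (v @ y) = DlM par i x v y + DlR par i (x @ v) y"
  unfolding DlR_def DlM_def length_append sum_lessThan_add
  by (intro arg_cong2[where f="(+)"] sum.cong) (auto simp: nth_append)

lemma Dl_append3: "Dl par i (x @ v @ y) = DlL par i x (v @ y) + DlM par i x v y + DlR par i (x @ v) y"
  by (simp add: Dl_append DlR_append add.assoc)




lemma tensor_sum_left: "tensor (sum f A) b = (\<Sum>x\<in>A. tensor (f x) b)"
  by (simp add: tensor_def lin_ext_sum)
lemma tensor_sum_right: "tensor a (sum f A) = (\<Sum>x\<in>A. tensor a (f x))"
  unfolding tensor_def lin_ext_sum by (rule lin_ext_fsum)

lemma if_sum_zero: "(if P then sum f A else 0) = (\<Sum>x\<in>A. if P then f x else 0)"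
  by simp

context
  fixes par :: "'a \<Rightarrow> bool" and p :: bool and d :: "'a \<Rightarrow> 'a tens"
begin

lemma P1:
  fixes w :: "'a list" and i :: 'a
  defines "n \<equiv> length w"
  shows "(\<Sum>j<n. if w ! j = i then scal (ksign (par i \<and> wpar par (drop j w)))
            (tensor (Dw par p d (take j w)) (sng (drop (Suc j) w) 1)) else 0)
   = (\<Sum>k<n. \<Sum>v\<in>kys (d (w ! k)). scal (ksign (p \<and> wpar par (take k w)) * lkp (d (w ! k)) v)
            (DlR par i (take k w @ v) (drop (Suc k) w)))"
proof -
  define g where "g k j = (if w ! j = i then (\<Sum>v\<in>kys (d (w ! k)).
       sng (take k w @ v @ drop (Suc k) (take j w), drop (Suc j) w)
         (ksign (par i \<and> wpar par (drop j w)) * (ksign (p \<and> wpar par (take k w)) * lkp (d (w ! k)) v))) else 0)" for k j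
  have L: "(\<Sum>j<n. if w ! j = i then scal (ksign (par i \<and> wpar par (drop j w)))
            (tensor (Dw par p d (take j w)) (sng (drop (Suc j) w) 1)) else 0) = (\<Sum>j<n. \<Sum>k<j. g k j)"
  proof (rule sum.cong[OF refl])
    fix j assume j: "j \<in> {..<n}"
    then have lj: "length (take j w) = j" by (simp add: n_def)
    show "(if w ! j = i then scal (ksign (par i \<and> wpar par (drop j w)))
            (tensor (Dw par p d (take j w)) (sng (drop (Suc j) w) 1)) else 0) = (\<Sum>k<j. g k j)"
      unfolding g_def Dw_def lj
      by (simp add: tensor_sum_left tensor_singles scal_sum if_sum_zero)
  qed
  have R: "(\<Sum>k<n. \<Sum>v\<in>kys (d (w ! k)). scal (ksign (p \<and> wpar par (take k w)) * lkp (d (w ! k)) v)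
            (DlR par i (take k w @ v) (drop (Suc k) w))) = (\<Sum>k<n. \<Sum>j<n - Suc k. g k (Suc k + j))"
  proof (rule sum.cong[OF refl])
    fix k assume k: "k \<in> {..<n}"
    have "(\<Sum>v\<in>kys (d (w ! k)). scal (ksign (p \<and> wpar par (take k w)) * lkp (d (w ! k)) v)
            (DlR par i (take k w @ v) (drop (Suc k) w)))
       = (\<Sum>v\<in>kys (d (w ! k)). \<Sum>j<n - Suc k. scal (ksign (p \<and> wpar par (take k w)) * lkp (d (w ! k)) v)
            (if drop (Suc k) w ! j = i then sng ((take k w @ v) @ take j (drop (Suc k) w), drop (Suc j) (drop (Suc k) w))
                           (ksign (par i \<and> wpar par (drop j (drop (Suc k) w)))) else 0))"
      by (simp add: DlR_def scal_sum n_def)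
    also have "\<dots> = (\<Sum>j<n - Suc k. \<Sum>v\<in>kys (d (w ! k)). scal (ksign (p \<and> wpar par (take k w)) * lkp (d (w ! k)) v)
            (if drop (Suc k) w ! j = i then sng ((take k w @ v) @ take j (drop (Suc k) w), drop (Suc j) (drop (Suc k) w))
                           (ksign (par i \<and> wpar par (drop j (drop (Suc k) w)))) else 0))"
      by (rule sum.swap)
    also have "\<dots> = (\<Sum>j<n - Suc k. g k (Suc k + j))"
    proof (rule sum.cong[OF refl])
      fix j assume j: "j \<in> {..<n - Suc k}"
      then have jj: "Suc k + j < n" by auto
      have a: "drop (Suc k) w ! j = w ! (Suc k + j)" using jj by (simp add: n_def)
      have b: "drop (Suc k) (take (Suc k + j) w) = take j (drop (Suc k) w)"
        by (simp add: drop_take)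
      have c: "drop j (drop (Suc k) w) = drop (Suc k + j) w" "drop (Suc j) (drop (Suc k) w) = drop (Suc (Suc k + j)) w"
        by (simp_all add: add.commute)
      show "(\<Sum>v\<in>kys (d (w ! k)). scal (ksign (p \<and> wpar par (take k w)) * lkp (d (w ! k)) v)
            (if drop (Suc k) w ! j = i then sng ((take k w @ v) @ take j (drop (Suc k) w), drop (Suc j) (drop (Suc k) w))
                           (ksign (par i \<and> wpar par (drop j (drop (Suc k) w)))) else 0)) = g k (Suc k + j)"
        unfolding g_def a b c by (simp add: if_sum_zero scal_if mult_ac cong: if_cong)
    qed
    finally show "(\<Sum>v\<in>kys (d (w ! k)). scal (ksign (p \<and> wpar par (take k w)) * lkp (d (w ! k)) v)
            (DlR par i (take k w @ v) (drop (Suc k) w))) = (\<Sum>j<n - Suc k. g k (Suc k + j))" .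
  qed
  show ?thesis unfolding L R sum_tri ..
qed

end



context
  fixes par :: "'a \<Rightarrow> bool" and p :: bool and d :: "'a \<Rightarrow> 'a tens"
  assumes dpar: "\<And>m v. v \<in> kys (d m) \<Longrightarrow> wpar par v = (par m \<noteq> p)"
begin

lemma P2:
  fixes w :: "'a list" and i :: 'a
  defines "n \<equiv> length w"
  shows "(\<Sum>j<n. if w ! j = i then scal (ksign (par i \<and> wpar par (drop j w)))
            (scal (ksign (p \<and> wpar par (take j w))) (tensor (sng (take j w) 1) (Dw par p d (drop (Suc j) w)))) else 0)
   = (\<Sum>k<n. \<Sum>v\<in>kys (d (w ! k)). scal (ksign (p \<and> wpar par (take k w)) * lkp (d (w ! k)) v)
            (DlL par i (take k w) (v @ drop (Suc k) w)))"
proof -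
  define h where "h j k = (if w ! j = i then (\<Sum>v\<in>kys (d (w ! k)).
       sng (take j w, drop (Suc j) (take k w) @ v @ drop (Suc k) w)
         (ksign (p \<and> wpar par (take k w)) * lkp (d (w ! k)) v * ksign (par i \<and> wpar par (drop j (take k w) @ v @ drop (Suc k) w)))) else 0)" for j k
  have R: "(\<Sum>k<n. \<Sum>v\<in>kys (d (w ! k)). scal (ksign (p \<and> wpar par (take k w)) * lkp (d (w ! k)) v)
            (DlL par i (take k w) (v @ drop (Suc k) w))) = (\<Sum>k<n. \<Sum>j<k. h j k)"
  proof (rule sum.cong[OF refl])
    fix k assume k: "k \<in> {..<n}"
    then have lk: "length (take k w) = k" by (simp add: n_def)
    have "(\<Sum>v\<in>kys (d (w ! k)). scal (ksign (p \<and> wpar par (take k w)) * lkp (d (w ! k)) v)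
            (DlL par i (take k w) (v @ drop (Suc k) w)))
      = (\<Sum>v\<in>kys (d (w ! k)). \<Sum>j<k. scal (ksign (p \<and> wpar par (take k w)) * lkp (d (w ! k)) v)
          (if take k w ! j = i then sng (take j (take k w), drop (Suc j) (take k w) @ v @ drop (Suc k) w)
                           (ksign (par i \<and> wpar par (drop j (take k w) @ v @ drop (Suc k) w))) else 0))"
      unfolding DlL_def lk by (simp add: scal_sum)
    also have "\<dots> = (\<Sum>j<k. \<Sum>v\<in>kys (d (w ! k)). scal (ksign (p \<and> wpar par (take k w)) * lkp (d (w ! k)) v)
          (if take k w ! j = i then sng (take j (take k w), drop (Suc j) (take k w) @ v @ drop (Suc k) w)
                           (ksign (par i \<and> wpar par (drop j (take k w) @ v @ drop (Suc k) w))) else 0))"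
      by (rule sum.swap)
    also have "\<dots> = (\<Sum>j<k. h j k)"
    proof (rule sum.cong[OF refl])
      fix j assume "j \<in> {..<k}"
      then have a: "take k w ! j = w ! j" "take j (take k w) = take j w" by auto
      show "(\<Sum>v\<in>kys (d (w ! k)). scal (ksign (p \<and> wpar par (take k w)) * lkp (d (w ! k)) v)
          (if take k w ! j = i then sng (take j (take k w), drop (Suc j) (take k w) @ v @ drop (Suc k) w)
                           (ksign (par i \<and> wpar par (drop j (take k w) @ v @ drop (Suc k) w))) else 0)) = h j k"
        unfolding h_def a by (simp add: if_sum_zero scal_if mult_ac cong: if_cong del: wpar_append)
    qed
    finally show "(\<Sum>v\<in>kys (d (w ! k)). scal (ksign (p \<and> wpar par (take k w)) * lkp (d (w ! k)) v)
            (DlL par i (take k w) (v @ drop (Suc k) w))) = (\<Sum>j<k. h j k)" .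
  qed
  have L: "(\<Sum>j<n. if w ! j = i then scal (ksign (par i \<and> wpar par (drop j w)))
            (scal (ksign (p \<and> wpar par (take j w))) (tensor (sng (take j w) 1) (Dw par p d (drop (Suc j) w)))) else 0)
     = (\<Sum>j<n. \<Sum>k<n - Suc j. h j (Suc j + k))"
  proof (rule sum.cong[OF refl])
    fix j assume j: "j \<in> {..<n}"
    define t where "t = drop (Suc j) w"
    have lt: "length t = n - Suc j" by (simp add: t_def n_def)
    show "(if w ! j = i then scal (ksign (par i \<and> wpar par (drop j w)))
            (scal (ksign (p \<and> wpar par (take j w))) (tensor (sng (take j w) 1) (Dw par p d (drop (Suc j) w)))) else 0)
        = (\<Sum>k<n - Suc j. h j (Suc j + k))"
    proof (cases "w ! j = i")
      case False then show ?thesis by (simp add: h_def)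
    next
      case True
      have "scal (ksign (par i \<and> wpar par (drop j w)))
            (scal (ksign (p \<and> wpar par (take j w))) (tensor (sng (take j w) 1) (Dw par p d t)))
         = (\<Sum>k<n - Suc j. \<Sum>v\<in>kys (d (t ! k)). sng (take j w, take k t @ v @ drop (Suc k) t)
              (ksign (par i \<and> wpar par (drop j w)) * (ksign (p \<and> wpar par (take j w)) *
                (ksign (p \<and> wpar par (take k t)) * lkp (d (t ! k)) v))))"
        unfolding Dw_def lt by (simp add: tensor_sum_right tensor_singles scal_sum del: wpar_append)
      also have "\<dots> = (\<Sum>k<n - Suc j. h j (Suc j + k))"
      proof (rule sum.cong[OF refl])
        fix k assume k: "k \<in> {..<n - Suc j}"
        define m where "m = w ! (Suc j + k)"
        define P Q R where "P = take j w" and "Q = take k t" and "R = drop (Suc (Suc j + k)) w"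
        have jn: "j < n" "Suc j + k < n" using j k by auto
        have tk: "t ! k = m" using jn by (simp add: t_def m_def n_def)
        have e1: "drop (Suc k) t = R" by (simp add: t_def R_def add.commute)
        have e2: "drop (Suc j) (take (Suc j + k) w) = Q" by (simp add: t_def Q_def drop_take)
        have e3: "take (Suc j + k) w = P @ i # Q"
        proof -
          have "take (Suc j + k) w = take (Suc j) w @ take k (drop (Suc j) w)" by (rule take_add)
          also have "take (Suc j) w = take j w @ [w ! j]" using jn by (simp add: take_Suc_conv_app_nth n_def)
          finally show ?thesis using True by (simp add: P_def Q_def t_def)
        qed
        have e4: "drop j w = i # Q @ m # R"
        proof -
          have "drop j w = w ! j # t" using jn by (simp add: t_def Cons_nth_drop_Suc n_def)
          moreover have "t = take k t @ drop k t" by simp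
          moreover have "drop k t = t ! k # drop (Suc k) t" using jn lt by (simp add: Cons_nth_drop_Suc)
          ultimately show ?thesis using True tk e1 by (simp add: Q_def)
        qed
        have e5: "drop j (take (Suc j + k) w) = i # Q" unfolding e3 using jn by (simp add: P_def n_def)
        show "(\<Sum>v\<in>kys (d (t ! k)). sng (take j w, take k t @ v @ drop (Suc k) t)
              (ksign (par i \<and> wpar par (drop j w)) * (ksign (p \<and> wpar par (take j w)) *
                (ksign (p \<and> wpar par (take k t)) * lkp (d (t ! k)) v)))) = h j (Suc j + k)"
          unfolding h_def tk
        proof (simp only: if_P[OF True] m_def[symmetric] e1 e2 e5 Q_def[symmetric] R_def[symmetric], rule sum.cong[OF refl])
          fix v assume v: "v \<in> kys (d m)"
          have pv: "wpar par v = (par m \<noteq> p)" using dpar[OF v] .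
          show "sng (take j w, Q @ v @ R)
              (ksign (par i \<and> wpar par (drop j w)) * (ksign (p \<and> wpar par (take j w)) *
                (ksign (p \<and> wpar par Q) * lkp (d m) v))) =
             sng (take j w, Q @ v @ R)
              (ksign (p \<and> wpar par (take (Suc j + k) w)) * lkp (d m) v * ksign (par i \<and> wpar par ((i # Q) @ v @ R)))"
            unfolding e3 e4 P_def[symmetric] using pv
            by (cases "par i"; cases "par m"; cases p; cases "wpar par P"; cases "wpar par Q"; cases "wpar par R")
               (simp_all add: ksign_def add.commute[of k j])
        qed
      qed
      finally show ?thesis using True by (simp add: t_def)
    qed
  qed
  show ?thesis unfolding L R sum_tri ..
qed

end



definition Cr :: "('a \<Rightarrow> bool) \<Rightarrow> bool \<Rightarrow> ('a \<Rightarrow> 'a tens) \<Rightarrow> 'a \<Rightarrow> 'a list \<Rightarrow> 'a tens2" where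
  "Cr par p d i w = (\<Sum>k<length w. \<Sum>v\<in>kys (d (w ! k)). scal (ksign (p \<and> wpar par (take k w)) * lkp (d (w ! k)) v)
            (DlM par i (take k w) v (drop (Suc k) w)))"

lemma if_add_zero: "(if P then a + b else 0) = (if P then a else 0) + (if P then b else (0::'b::comm_monoid_add))"
  by simp

lemma word_main:
  fixes par :: "'a \<Rightarrow> bool" and d :: "'a \<Rightarrow> 'a tens"
  assumes dpar: "\<And>m v. v \<in> kys (d m) \<Longrightarrow> wpar par v = (par m \<noteq> p)"
    and Dsng: "\<And>u. D (sng u 1) = Dw par p d u"
  shows "lin_ext (Dl par i) (Dw par p d w) = L2 par p D (Dl par i w) + Cr par p d i w"
proof -
  have "lin_ext (Dl par i) (Dw par p d w) =
     (\<Sum>k<length w. \<Sum>v\<in>kys (d (w ! k)). scal (ksign (p \<and> wpar par (take k w)) * lkp (d (w ! k)) v)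
        (DlL par i (take k w) (v @ drop (Suc k) w) + DlM par i (take k w) v (drop (Suc k) w) + DlR par i (take k w @ v) (drop (Suc k) w)))"
    unfolding Dw_def by (simp add: lin_ext_sum Dl_append3 del: scal_add)
  also have "\<dots> = (\<Sum>k<length w. \<Sum>v\<in>kys (d (w ! k)). scal (ksign (p \<and> wpar par (take k w)) * lkp (d (w ! k)) v)
        (DlL par i (take k w) (v @ drop (Suc k) w))) + Cr par p d i w +
      (\<Sum>k<length w. \<Sum>v\<in>kys (d (w ! k)). scal (ksign (p \<and> wpar par (take k w)) * lkp (d (w ! k)) v)
        (DlR par i (take k w @ v) (drop (Suc k) w)))"
    unfolding Cr_def by (simp add: sum.distrib)
  also have "\<dots> = L2 par p D (Dl par i w) + Cr par p d i w"
  proof -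
    have "L2 par p D (Dl par i w) =
      (\<Sum>j<length w. if w ! j = i then scal (ksign (par i \<and> wpar par (drop j w)))
            (tensor (Dw par p d (take j w)) (sng (drop (Suc j) w) 1)) else 0) +
      (\<Sum>j<length w. if w ! j = i then scal (ksign (par i \<and> wpar par (drop j w)))
            (scal (ksign (p \<and> wpar par (take j w))) (tensor (sng (take j w) 1) (Dw par p d (drop (Suc j) w)))) else 0)"
      unfolding L2_def Dl_def by (simp add: lin_ext_sum Dsng if_distrib[of "lin_ext _"] if_add_zero sum.distrib
           del: scal_scal wpar_append cong: if_cong)
    then show ?thesis
      using P1[where par=par and p=p and d=d and w=w and i=i] P2[where par=par and p=p and d=d, OF dpar] by (simp add: algebra_simps)
  qed
  finally show ?thesis .
qed




lemma rspan_zero: "0 \<in> rspan S"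
  unfolding rspan_def by (rule CollectI, rule exI[of _ "{}"]) simp

lemma rspan_base: "s \<in> S \<Longrightarrow> s \<in> rspan S"
  unfolding rspan_def by (rule CollectI, rule exI[of _ "{s}"], rule exI[of _ "\<lambda>_. 1"]) simp

lemma rspan_scal: "x \<in> rspan S \<Longrightarrow> scal a x \<in> rspan S"
proof -
  assume "x \<in> rspan S"
  then obtain F c where "finite F" "F \<subseteq> S" "x = (\<Sum>s\<in>F. scal (c s) s)" unfolding rspan_def by blast
  then show ?thesis unfolding rspan_def
    by (intro CollectI exI[of _ F] exI[of _ "\<lambda>s. a * c s"]) (simp add: scal_sum)
qed

lemma rspan_add: "x \<in> rspan S \<Longrightarrow> y \<in> rspan S \<Longrightarrow> x + y \<in> rspan S"
proof -
  assume "x \<in> rspan S" "y \<in> rspan S"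
  then obtain F c G e where F: "finite F" "F \<subseteq> S" "x = (\<Sum>s\<in>F. scal (c s) s)"
    and G: "finite G" "G \<subseteq> S" "y = (\<Sum>s\<in>G. scal (e s) s)" unfolding rspan_def by blast
  define c' where "c' s = (if s \<in> F then c s else 0)" for s
  define e' where "e' s = (if s \<in> G then e s else 0)" for s
  have x: "x = (\<Sum>s\<in>F \<union> G. scal (c' s) s)"
    unfolding F(3) by (rule sum.mono_neutral_cong_left) (auto simp: F G c'_def)
  have y: "y = (\<Sum>s\<in>F \<union> G. scal (e' s) s)"
    unfolding G(3) by (rule sum.mono_neutral_cong_left) (auto simp: F G e'_def)
  show ?thesis unfolding rspan_def
    by (intro CollectI exI[of _ "F \<union> G"] exI[of _ "\<lambda>s. c' s + e' s"])
       (simp add: x y F G scal_addl sum.distrib)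
qed

lemma scal_neg1: "scal (-1) x = - x"
  by (rule poly_mapping_eqI) simp

lemma rspan_diff: "x \<in> rspan S \<Longrightarrow> y \<in> rspan S \<Longrightarrow> x - y \<in> rspan S"
  using rspan_add[of x S "scal (-1) y"] rspan_scal[of y S "-1"] by (simp add: scal_neg1)

lemma rspan_sum: "(\<And>x. x \<in> A \<Longrightarrow> f x \<in> rspan S) \<Longrightarrow> sum f A \<in> rspan S"
  by (induction A rule: infinite_finite_induct) (auto simp: rspan_zero rspan_add)

lemma comm_single: "sng (x @ y) 1 - sng (y @ x) (ksign (wpar par x \<and> wpar par y)) \<in> comm_sub par"
proof -
  have "tmul (sng x 1) (sng y 1) - scal (ksign (wpar par x \<and> wpar par y)) (tmul (sng y 1) (sng x 1))
     \<in> {tmul a b - scal (ksign (p \<and> q)) (tmul b a) | a b p q. homog par p a \<and> homog par q b}"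
    using homog_single[of par x 1] homog_single[of par y 1] by blast
  then show ?thesis unfolding comm_sub_def by (simp add: tmul_singles rspan_base)
qed

lemma rotation:
  "sng (x @ y, z @ t) c - sng (y @ x, t @ z) (c * ksign ((wpar par x \<and> wpar par y) \<noteq> (wpar par z \<and> wpar par t)))
   \<in> dr2_kernel par"
proof -
  define s1 where "s1 = ksign (wpar par x \<and> wpar par y)"
  define s2 where "s2 = ksign (wpar par z \<and> wpar par t)"
  have a: "tensor (sng (x @ y) 1 - sng (y @ x) s1) (sng (z @ t) c) \<in> dr2_kernel par"
    unfolding dr2_kernel_def using comm_single[of x y par] by (intro rspan_base) (auto simp: s1_def)
  have b: "tensor (sng (y @ x) (s1 * c)) (sng (z @ t) 1 - sng (t @ z) s2) \<in> dr2_kernel par"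
    unfolding dr2_kernel_def using comm_single[of z t par] by (intro rspan_base) (auto simp: s2_def)
  have "sng (x @ y, z @ t) c - sng (y @ x, t @ z) (c * (s1 * s2)) =
     tensor (sng (x @ y) 1 - sng (y @ x) s1) (sng (z @ t) c) + tensor (sng (y @ x) (s1 * c)) (sng (z @ t) 1 - sng (t @ z) s2)"
    by (simp add: tensor_diff_left tensor_diff_right tensor_singles mult_ac)
  moreover have "s1 * s2 = ksign ((wpar par x \<and> wpar par y) \<noteq> (wpar par z \<and> wpar par t))"
    by (simp add: s1_def s2_def ksign_mult)
  ultimately show ?thesis using rspan_add[OF a[unfolded dr2_kernel_def] b[unfolded dr2_kernel_def]]
    by (simp add: dr2_kernel_def)
qed




definition TT :: "('a \<Rightarrow> bool) \<Rightarrow> bool \<Rightarrow> ('a \<Rightarrow> 'a tens) \<Rightarrow> rat \<Rightarrow> 'a \<Rightarrow> 'a \<Rightarrow> 'a list \<Rightarrow> nat \<Rightarrow> 'a list \<Rightarrow> nat \<Rightarrow> 'a tens2" where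
  "TT par p d \<alpha> i m w k v j = (if w ! k = m \<and> v ! j = i then
     sng (take k w @ take j v, drop (Suc j) v @ drop (Suc k) w)
       (\<alpha> * (ksign (p \<and> wpar par (take k w)) * lkp (d m) v * ksign (par i \<and> wpar par (drop j v @ drop (Suc k) w))))
     else 0)"

lemma crossform:
  fixes d :: "'a::finite \<Rightarrow> 'a tens"
  shows "scal \<alpha> (Cr par p d i w) =
    (\<Sum>m\<in>UNIV. \<Sum>k<length w. \<Sum>v\<in>kys (d m). \<Sum>j<length v. TT par p d \<alpha> i m w k v j)"
proof -
  have "(\<Sum>m\<in>UNIV. \<Sum>k<length w. \<Sum>v\<in>kys (d m). \<Sum>j<length v. TT par p d \<alpha> i m w k v j)
      = (\<Sum>k<length w. \<Sum>m\<in>UNIV. \<Sum>v\<in>kys (d m). \<Sum>j<length v. TT par p d \<alpha> i m w k v j)"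
    by (rule sum.swap)
  also have "\<dots> = (\<Sum>k<length w. scal \<alpha> (\<Sum>v\<in>kys (d (w ! k)). scal (ksign (p \<and> wpar par (take k w)) * lkp (d (w ! k)) v)
            (DlM par i (take k w) v (drop (Suc k) w))))"
  proof (rule sum.cong[OF refl])
    fix k
    define H where "H m = (\<Sum>v\<in>kys (d m). \<Sum>j<length v. if v ! j = i then
     sng (take k w @ take j v, drop (Suc j) v @ drop (Suc k) w)
       (\<alpha> * (ksign (p \<and> wpar par (take k w)) * lkp (d m) v * ksign (par i \<and> wpar par (drop j v @ drop (Suc k) w))))
     else 0)" for m
    have "(\<Sum>m\<in>UNIV. \<Sum>v\<in>kys (d m). \<Sum>j<length v. TT par p d \<alpha> i m w k v j) = (\<Sum>m\<in>UNIV. if w ! k = m then H m else 0)"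
      by (rule sum.cong[OF refl]) (auto simp: H_def TT_def)
    also have "\<dots> = H (w ! k)" by (simp add: sum.delta)
    also have "\<dots> = scal \<alpha> (\<Sum>v\<in>kys (d (w ! k)). scal (ksign (p \<and> wpar par (take k w)) * lkp (d (w ! k)) v)
            (DlM par i (take k w) v (drop (Suc k) w)))"
      unfolding H_def DlM_def by (simp add: scal_sum if_distrib[of "scal _"] mult_ac del: wpar_append cong: if_cong)
    finally show "(\<Sum>m\<in>UNIV. \<Sum>v\<in>kys (d m). \<Sum>j<length v. TT par p d \<alpha> i m w k v j) = \<dots>" .
  qed
  also have "\<dots> = scal \<alpha> (Cr par p d i w)" by (simp add: Cr_def scal_sum)
  finally show ?thesis ..
qed

lemma swap4: "(\<Sum>v\<in>V. \<Sum>j\<in>J v. \<Sum>w\<in>W. \<Sum>k\<in>K w. f v j w k) = (\<Sum>w\<in>W. \<Sum>k\<in>K w. \<Sum>v\<in>V. \<Sum>j\<in>J v. f v j w k)"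
proof -
  have "(\<Sum>v\<in>V. \<Sum>j\<in>J v. \<Sum>w\<in>W. \<Sum>k\<in>K w. f v j w k) = (\<Sum>v\<in>V. \<Sum>w\<in>W. \<Sum>j\<in>J v. \<Sum>k\<in>K w. f v j w k)"
    by (rule sum.cong[OF refl], rule sum.swap)
  also have "\<dots> = (\<Sum>w\<in>W. \<Sum>v\<in>V. \<Sum>j\<in>J v. \<Sum>k\<in>K w. f v j w k)" by (rule sum.swap)
  also have "\<dots> = (\<Sum>w\<in>W. \<Sum>v\<in>V. \<Sum>k\<in>K w. \<Sum>j\<in>J v. f v j w k)"
    by (intro sum.cong[OF refl] sum.swap)
  also have "\<dots> = (\<Sum>w\<in>W. \<Sum>k\<in>K w. \<Sum>v\<in>V. \<Sum>j\<in>J v. f v j w k)"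
    by (intro sum.cong[OF refl] sum.swap)
  finally show ?thesis .
qed

lemma term_kernel:
  fixes d e :: "'a \<Rightarrow> 'a tens"
  assumes dpar: "\<And>m v. v \<in> kys (d m) \<Longrightarrow> wpar par v = (par m \<noteq> p)"
    and epar: "\<And>m v. v \<in> kys (e m) \<Longrightarrow> wpar par v = (par m \<noteq> q)"
    and w: "w \<in> kys (e i)" and v: "v \<in> kys (d m)" and k: "k < length w" and j: "j < length v"
  shows "TT par p d (lkp (e i) w) i m w k v j - scal (ksign (p \<and> q)) (TT par q e (lkp (d m) v) m i v j w k)
     \<in> dr2_kernel par"
proof (cases "w ! k = m \<and> v ! j = i")
  case False
  then show ?thesis by (auto simp: TT_def dr2_kernel_def rspan_zero)
next
  case True
  define A B a b where "A = take k w" and "B = drop (Suc k) w" and "a = take j v" and "b = drop (Suc j) v"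
  have dw: "drop k w = m # B" using k True by (simp add: B_def Cons_nth_drop_Suc[symmetric])
  have dv: "drop j v = i # b" using j True by (simp add: b_def Cons_nth_drop_Suc[symmetric])
  have ww: "w = A @ m # B" using dw by (metis A_def append_take_drop_id)
  have vv: "v = a @ i # b" using dv by (metis a_def append_take_drop_id)
  have pw: "(wpar par A \<noteq> (par m \<noteq> wpar par B)) = (par i \<noteq> q)" using epar[OF w] ww by simp
  have pv: "(wpar par a \<noteq> (par i \<noteq> wpar par b)) = (par m \<noteq> p)" using dpar[OF v] vv by simp
  define c1 where "c1 = lkp (e i) w * (ksign (p \<and> wpar par A) * lkp (d m) v * ksign (par i \<and> wpar par (drop j v @ B)))"
  define c2 where "c2 = lkp (d m) v * (ksign (q \<and> wpar par a) * lkp (e i) w * ksign (par m \<and> wpar par (drop k w @ b)))"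
  have T1: "TT par p d (lkp (e i) w) i m w k v j = sng (A @ a, b @ B) c1"
    unfolding TT_def c1_def A_def B_def a_def b_def using True by (simp only: if_True simp_thms)
  have T2: "TT par q e (lkp (d m) v) m i v j w k = sng (a @ A, B @ b) c2"
    unfolding TT_def c2_def A_def B_def a_def b_def using True by (simp only: if_True simp_thms)
  have c: "ksign (p \<and> q) * c2 = c1 * ksign ((wpar par A \<and> wpar par a) \<noteq> (wpar par b \<and> wpar par B))"
    unfolding c1_def c2_def dw dv using pw pv
    by (cases "par i"; cases "par m"; cases p; cases q; cases "wpar par A"; cases "wpar par B";
        cases "wpar par a"; cases "wpar par b") (simp_all add: ksign_def)
  have eq: "TT par p d (lkp (e i) w) i m w k v j - scal (ksign (p \<and> q)) (TT par q e (lkp (d m) v) m i v j w k)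
    = sng (A @ a, b @ B) c1 - sng (a @ A, B @ b) (c1 * ksign ((wpar par A \<and> wpar par a) \<noteq> (wpar par b \<and> wpar par B)))"
    unfolding T1 T2 scal_single c ..
  show ?thesis unfolding eq by (rule rotation)
qed



lemma global_D:
  assumes VF: "is_vector_field par p D"
  shows "lin_ext (Dl par i) (D a) = L2 par p D (lin_ext (Dl par i) a) + lin_ext (Cr par p (\<lambda>i. D (gen i)) i) a"
proof -
  have dpar: "\<And>m v. v \<in> kys ((\<lambda>i. D (gen i)) m) \<Longrightarrow> wpar par v = (par m \<noteq> p)"
    using vf_gen_par[OF VF] by simp
  have "lin_ext (Dl par i) (D a) = lin_ext (\<lambda>w. lin_ext (Dl par i) (Dw par p (\<lambda>i. D (gen i)) w)) a"
    unfolding vf_rep[OF VF, of a] lin_ext_comp ..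
  also have "\<dots> = lin_ext (\<lambda>w. L2 par p D (Dl par i w) + Cr par p (\<lambda>i. D (gen i)) i w) a"
    using word_main[where D=D, OF dpar vf_word[OF VF]] by simp
  also have "\<dots> = L2 par p D (lin_ext (Dl par i) a) + lin_ext (Cr par p (\<lambda>i. D (gen i)) i) a"
    unfolding lin_ext_fadd L2_def lin_ext_comp ..
  finally show ?thesis .
qed

lemma kernel_sum: "(\<And>x. x \<in> A \<Longrightarrow> f x \<in> dr2_kernel par) \<Longrightarrow> sum f A \<in> dr2_kernel par"
  unfolding dr2_kernel_def by (rule rspan_sum)

lemma cross_cancel:
  fixes d e :: "'a::finite \<Rightarrow> 'a tens"
  assumes dpar: "\<And>m v. v \<in> kys (d m) \<Longrightarrow> wpar par v = (par m \<noteq> p)"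
    and epar: "\<And>m v. v \<in> kys (e m) \<Longrightarrow> wpar par v = (par m \<noteq> q)"
  shows "(\<Sum>i\<in>UNIV. lin_ext (Cr par p d i) (e i)) - scal (ksign (p \<and> q)) (\<Sum>m\<in>UNIV. lin_ext (Cr par q e m) (d m))
     \<in> dr2_kernel par"
proof -
  define s where "s = ksign (p \<and> q)"
  have C1: "(\<Sum>i\<in>UNIV. lin_ext (Cr par p d i) (e i)) = (\<Sum>i\<in>UNIV. \<Sum>m\<in>UNIV. \<Sum>w\<in>kys (e i). \<Sum>k<length w.
      \<Sum>v\<in>kys (d m). \<Sum>j<length v. TT par p d (lkp (e i) w) i m w k v j)"
  proof (rule sum.cong[OF refl])
    fix i
    have "lin_ext (Cr par p d i) (e i) = (\<Sum>w\<in>kys (e i). \<Sum>m\<in>UNIV. \<Sum>k<length w.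
      \<Sum>v\<in>kys (d m). \<Sum>j<length v. TT par p d (lkp (e i) w) i m w k v j)"
      unfolding lin_ext_def crossform ..
    also have "\<dots> = (\<Sum>m\<in>UNIV. \<Sum>w\<in>kys (e i). \<Sum>k<length w.
      \<Sum>v\<in>kys (d m). \<Sum>j<length v. TT par p d (lkp (e i) w) i m w k v j)"
      by (rule sum.swap)
    finally show "lin_ext (Cr par p d i) (e i) = \<dots>" .
  qed
  have C2: "(\<Sum>m\<in>UNIV. lin_ext (Cr par q e m) (d m)) = (\<Sum>i\<in>UNIV. \<Sum>m\<in>UNIV. \<Sum>w\<in>kys (e i). \<Sum>k<length w.
      \<Sum>v\<in>kys (d m). \<Sum>j<length v. TT par q e (lkp (d m) v) m i v j w k)"
  proof -
    have "(\<Sum>m\<in>UNIV. lin_ext (Cr par q e m) (d m)) = (\<Sum>m\<in>UNIV. \<Sum>v\<in>kys (d m). \<Sum>i\<in>UNIV. \<Sum>j<length v.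
       \<Sum>w\<in>kys (e i). \<Sum>k<length w. TT par q e (lkp (d m) v) m i v j w k)"
      unfolding lin_ext_def crossform ..
    also have "\<dots> = (\<Sum>m\<in>UNIV. \<Sum>i\<in>UNIV. \<Sum>v\<in>kys (d m). \<Sum>j<length v.
       \<Sum>w\<in>kys (e i). \<Sum>k<length w. TT par q e (lkp (d m) v) m i v j w k)"
      by (intro sum.cong[OF refl] sum.swap)
    also have "\<dots> = (\<Sum>i\<in>UNIV. \<Sum>m\<in>UNIV. \<Sum>v\<in>kys (d m). \<Sum>j<length v.
       \<Sum>w\<in>kys (e i). \<Sum>k<length w. TT par q e (lkp (d m) v) m i v j w k)"
      by (rule sum.swap)
    also have "\<dots> = (\<Sum>i\<in>UNIV. \<Sum>m\<in>UNIV. \<Sum>w\<in>kys (e i). \<Sum>k<length w.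
      \<Sum>v\<in>kys (d m). \<Sum>j<length v. TT par q e (lkp (d m) v) m i v j w k)"
      by (intro sum.cong[OF refl] swap4)
    finally show ?thesis .
  qed
  have "(\<Sum>i\<in>UNIV. lin_ext (Cr par p d i) (e i)) - scal s (\<Sum>m\<in>UNIV. lin_ext (Cr par q e m) (d m))
     = (\<Sum>i\<in>UNIV. \<Sum>m\<in>UNIV. \<Sum>w\<in>kys (e i). \<Sum>k<length w.
      \<Sum>v\<in>kys (d m). \<Sum>j<length v. TT par p d (lkp (e i) w) i m w k v j - scal s (TT par q e (lkp (d m) v) m i v j w k))"
    unfolding C1 C2 by (simp only: scal_sum sum_subtractf)
  also have "\<dots> \<in> dr2_kernel par"
    unfolding s_def
    by (intro kernel_sum term_kernel[OF dpar epar]; simp)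
  finally show ?thesis unfolding s_def .
qed

lemma diff_aux: "(n::'b::ab_group_add) = y + x \<Longrightarrow> n - y = x" by simp

lemma sum_rearr: "(\<Sum>i\<in>A. (a i + b i) - scal s (c i + f i)) = (\<Sum>i\<in>A. a i) - scal s (\<Sum>i\<in>A. c i)
      + ((\<Sum>i\<in>A. b i) - scal s (\<Sum>m\<in>A. f m))"
  by (simp add: sum_subtractf sum.distrib scal_sum)

theorem lemma2p10:
  fixes par :: "'a::finite \<Rightarrow> bool"
    and D E :: "'a tens \<Rightarrow> 'a tens"
    and p q :: bool
  assumes "is_vector_field par p D"
    and "is_vector_field par q E"
  shows "dr2_eq par (nabla par (vf_bracket p D q E))
           (L2 par p D (nabla par E) - scal (ksign (p \<and> q)) (L2 par q E (nabla par D)))"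
proof -
  note VD = assms(1) and VE = assms(2)
  define d where "d i = D (gen i)" for i
  define e where "e i = E (gen i)" for i
  define s where "s = ksign (p \<and> q)"
  have dpar: "\<And>m v. v \<in> kys (d m) \<Longrightarrow> wpar par v = (par m \<noteq> p)"
    using vf_gen_par[OF VD] by (simp add: d_def)
  have epar: "\<And>m v. v \<in> kys (e m) \<Longrightarrow> wpar par v = (par m \<noteq> q)"
    using vf_gen_par[OF VE] by (simp add: e_def)
  have gD: "\<And>i a. lin_ext (Dl par i) (D a) = L2 par p D (lin_ext (Dl par i) a) + lin_ext (Cr par p d i) a"
    unfolding d_def[abs_def] by (rule global_D[OF VD])
  have gE: "\<And>i a. lin_ext (Dl par i) (E a) = L2 par q E (lin_ext (Dl par i) a) + lin_ext (Cr par q e i) a"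
    unfolding e_def[abs_def] by (rule global_D[OF VE])
  have L2sum: "\<And>F X f. L2 par F X (sum f UNIV) = (\<Sum>i\<in>UNIV. L2 par F X (f i))"
    by (simp add: L2_def lin_ext_sum)
  have "nabla par (vf_bracket p D q E) = (\<Sum>i\<in>UNIV. lin_ext (Dl par i) (D (e i)) - scal s (lin_ext (Dl par i) (E (d i))))"
    unfolding nabla_Dl vf_bracket_def lin_ext_minus lin_ext_scal d_def e_def s_def ..
  also have "\<dots> = (\<Sum>i\<in>UNIV. L2 par p D (lin_ext (Dl par i) (e i))) - scal s (\<Sum>i\<in>UNIV. L2 par q E (lin_ext (Dl par i) (d i)))
      + ((\<Sum>i\<in>UNIV. lin_ext (Cr par p d i) (e i)) - scal s (\<Sum>m\<in>UNIV. lin_ext (Cr par q e m) (d m)))"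
    unfolding gD gE by (rule sum_rearr)
  also have "(\<Sum>i\<in>UNIV. L2 par p D (lin_ext (Dl par i) (e i))) = L2 par p D (nabla par E)"
    unfolding nabla_Dl L2sum e_def ..
  also have "(\<Sum>i\<in>UNIV. L2 par q E (lin_ext (Dl par i) (d i))) = L2 par q E (nabla par D)"
    unfolding nabla_Dl L2sum d_def ..
  finally have eq: "nabla par (vf_bracket p D q E) - (L2 par p D (nabla par E) - scal s (L2 par q E (nabla par D)))
     = (\<Sum>i\<in>UNIV. lin_ext (Cr par p d i) (e i)) - scal s (\<Sum>m\<in>UNIV. lin_ext (Cr par q e m) (d m))"
    by (rule diff_aux)
  show ?thesis unfolding dr2_eq_def s_def[symmetric] eq
    by (rule cross_cancel[OF dpar epar, folded s_def])
qed

end
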